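(* Let $p$ be prime, $a\in\mathbb{Z}_p^\times$, and $k$ an integer with $2\le k\le p-2$ and $\gcd(k,p-1)=1$. Then $D(\eta_{a,k})\le C\,k^{1/4}p^{3/4}\log^2 p$ for an absolute constant $C$ (uniformly in $a$ and $k$).
   Context: $\eta_{a,k}$ is the permutation of $\mathbb{Z}_p$ given by $\eta_{a,k}(s)=as^k$ (a permutation since $\gcd(k,p-1)=1$). An interval of $\mathbb{Z}_n$ is any subset that is the image of an interval of consecutive integers under the projection $\mathbb{Z}\to\mathbb{Z}_n$ (wrap-around allowed). For $S,T\subseteq\mathbb{Z}_n$, $D_T(S)=\bigl|\,|S\cap T|-|S||T|/n\,\bigr|$, and for a permutation $\sigma$ of $\mathbb{Z}_n$, $D(\sigma)=\max_{I,J}D_J(\sigma(I))$ over all intervals $I,J$ of $\mathbb{Z}_n$. *)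

theory Defs
  imports "HOL-Analysis.Analysis" "HOL-Computational_Algebra.Primes"
begin

text \<open>Z_n is modelled as the set {0..<n} of natural numbers (residues).\<close>

definition zn_interval :: "nat \<Rightarrow> nat \<Rightarrow> nat \<Rightarrow> nat set" where
  "zn_interval n s L = {(s + i) mod n | i. i < L}"

text \<open>Intervals of Z_n: images of runs of consecutive integers (wrap-around allowed);
  a run of length L \<ge> n covers all of Z_n, so lengths 0..n suffice.\<close>
definition zn_intervals :: "nat \<Rightarrow> nat set set" where
  "zn_intervals n = {zn_interval n s L | s L. s < n \<and> L \<le> n}"

definition discr :: "nat \<Rightarrow> nat set \<Rightarrow> nat set \<Rightarrow> real" where
  "discr n T S = \<bar>real (card (S \<inter> T)) - real (card S) * real (card T) / real n\<bar>"

definition perm_discrepancy :: "nat \<Rightarrow> (nat \<Rightarrow> nat) \<Rightarrow> real" where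
  "perm_discrepancy n \<sigma> = Max {discr n J (\<sigma> ` I) | I J. I \<in> zn_intervals n \<and> J \<in> zn_intervals n}"

definition eta :: "nat \<Rightarrow> nat \<Rightarrow> nat \<Rightarrow> nat \<Rightarrow> nat" where
  "eta p a k s = (a * s ^ k) mod p"

end

theory Submission
  imports Defs "HOL-Number_Theory.Residues"
begin

lemma sin_half_lower:
  fixes x :: real assumes "0 \<le> x" "x \<le> pi/2" shows "x/2 \<le> sin x"
proof (cases "x \<le> pi/3")
  case True
  let ?f = "\<lambda>x. sin x - x/2"
  have "\<And>u. \<lbrakk>0 \<le> u; u \<le> x\<rbrakk> \<Longrightarrow> (?f has_real_derivative cos u - 1/2) (at u)"
    by (auto intro!: derivative_eq_intros)
  moreover have "\<And>u. \<lbrakk>0 \<le> u; u \<le> x\<rbrakk> \<Longrightarrow> 0 \<le> cos u - 1/2"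
  proof -
    fix u assume "0 \<le> u" "u \<le> x"
    then have "cos (pi/3) \<le> cos u" using True by (intro cos_monotone_0_pi_le) auto
    then show "0 \<le> cos u - 1/2" by (simp add: cos_60)
  qed
  ultimately have "?f x \<ge> ?f 0"
    using DERIV_nonneg_imp_nondecreasing[OF assms(1), of ?f] by blast
  then show ?thesis by simp
next
  case False
  have "sin (pi/3) \<le> sin x" using False assms by (intro sin_monotone_2pi_le) auto
  moreover have "sqrt 3 / 2 \<ge> pi/4"
  proof -
    have "(1.7::real) \<le> sqrt 3" by (rule real_le_rsqrt) (simp add: power2_eq_square)
    moreover have "pi \<le> 3.2" using pi_approx by simp
    ultimately show ?thesis by linarith
  qed
  ultimately show ?thesis using assms by (simp add: sin_60)
qed

lemma sin_lower:
  fixes x :: real assumes "0 \<le> x" "x \<le> pi" shows "min x (pi - x) / 2 \<le> sin x"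
proof (cases "x \<le> pi/2")
  case True then show ?thesis using sin_half_lower[of x] assms by simp
next
  case False
  then have "(pi - x)/2 \<le> sin (pi - x)" using sin_half_lower[of "pi - x"] assms by simp
  then show ?thesis by simp
qed

definition e :: "nat \<Rightarrow> int \<Rightarrow> complex" where
  "e p m = cis (2 * pi * of_int m / real p)"

lemma e_add: "e p (m + n) = e p m * e p n"
  by (simp add: e_def cis_mult add_divide_distrib distrib_left)

lemma e_zero[simp]: "e p 0 = 1" by (simp add: e_def)

lemma norm_e[simp]: "norm (e p m) = 1" by (simp add: e_def)

lemma e_neg: "e p (- m) = cnj (e p m)"
  by (simp add: e_def cis_cnj)

lemma e_mult_p: "p > 0 \<Longrightarrow> e p (int p * q) = 1"
proof -
  assume "p > 0"
  then have "2 * pi * of_int (int p * q) / real p = 2 * pi * of_int q" by simp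
  then show ?thesis unfolding e_def by simp
qed

lemma e_mod: "p > 0 \<Longrightarrow> e p (m mod int p) = e p m"
proof -
  assume p: "p > 0"
  have "e p m = e p (m mod int p + int p * (m div int p))" by (metis mult_div_mod_eq add.commute)
  also have "\<dots> = e p (m mod int p)" by (simp only: e_add e_mult_p[OF p] mult_1_right)
  finally show ?thesis by simp
qed

lemma e_cong: "p > 0 \<Longrightarrow> m mod int p = n mod int p \<Longrightarrow> e p m = e p n"
  by (metis e_mod)

lemma e_power: "e p m ^ n = e p (int n * m)"
proof -
  have "e p m ^ n = cis (real n * (2 * pi * of_int m / real p))" unfolding e_def by (rule Complex.DeMoivre)
  also have "real n * (2 * pi * of_int m / real p) = 2 * pi * of_int (int n * m) / real p" by simp
  finally show ?thesis unfolding e_def .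
qed

lemma norm_1_minus_e:
  assumes "0 < r" "r < p"
  shows "norm (1 - e p (int r)) \<ge> 2 * real (min r (p - r)) / real p"
proof -
  define t where "t = 2 * pi * real r / real p"
  have cx: "e p (int r) = exp (\<i> * of_real t)" by (simp add: e_def t_def cis_conv_exp)
  have "norm (1 - e p (int r)) = norm (e p (int r) - 1)" by (simp add: norm_minus_commute)
  also have "\<dots> = 2 * \<bar>sin (t/2)\<bar>" unfolding cx by (rule dist_exp_i_1)
  finally have eq: "norm (1 - e p (int r)) = 2 * \<bar>sin (t/2)\<bar>" .
  have t2: "t/2 = pi * (real r / real p)" by (simp add: t_def)
  have p0: "real p > 0" using assms by simp
  have fr: "0 \<le> real r / real p" "real r / real p \<le> 1" using assms by auto
  have "0 \<le> t/2" "t/2 \<le> pi" unfolding t2 using fr by (auto simp: mult_le_cancel_left1 simp del: times_divide_eq_right)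
  then have sl: "min (t/2) (pi - t/2) / 2 \<le> sin (t/2)" by (rule sin_lower)
  have "min (t/2) (pi - t/2) = pi * (real (min r (p - r)) / real p)"
    unfolding t2 using assms p0 by (auto simp: min_def field_simps of_nat_diff)
  also have "\<dots> \<ge> 2 * (real (min r (p - r)) / real p)"
    using pi_gt3 by (intro mult_right_mono) auto
  finally show ?thesis using sl eq by auto
qed

lemma e_ne_1:
  assumes "p > 0" "\<not> int p dvd m" shows "e p m \<noteq> 1"
proof
  assume h: "e p m = 1"
  define r where "r = nat (m mod int p)"
  have m0: "m mod int p \<noteq> 0" using assms(2) by (simp add: dvd_eq_mod_eq_0)
  have m1: "0 \<le> m mod int p" "m mod int p < int p" using assms(1) by simp_all
  have r: "int r = m mod int p" using m1 unfolding r_def by simp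
  have "0 < r" "r < p" using m0 m1 r by linarith+
  then have "norm (1 - e p (int r)) \<ge> 2 * real (min r (p - r)) / real p" by (rule norm_1_minus_e)
  moreover have "e p (int r) = 1" using h r e_mod[OF assms(1), of m] by simp
  moreover have "2 * real (min r (p - r)) / real p > 0" using \<open>0 < r\<close> \<open>r < p\<close> by simp
  ultimately show False by simp
qed

lemma orth:
  assumes "p > 0"
  shows "(\<Sum>h<p. e p (int h * m)) = (if int p dvd m then of_nat p else 0)"
proof (cases "int p dvd m")
  case True
  then obtain q where q: "m = int p * q" by auto
  have "e p (int h * m) = 1" for h
    using e_mult_p[OF assms, of "int h * q"] by (simp add: q mult_ac)
  then show ?thesis using True by simp
next
  case False
  have z: "e p m \<noteq> 1" by (rule e_ne_1[OF assms False])
  have "(\<Sum>h<p. e p (int h * m)) = (\<Sum>h<p. e p m ^ h)" by (simp add: e_power)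
  also have "\<dots> = (e p m ^ p - 1) / (e p m - 1)" using z by (rule geometric_sum)
  also have "e p m ^ p = 1" using e_mult_p[OF assms, of m] by (simp add: e_power)
  finally show ?thesis using False by simp
qed

definition F :: "nat \<Rightarrow> nat set \<Rightarrow> nat \<Rightarrow> complex" where
  "F p A h = (\<Sum>u\<in>A. e p (- (int h * int u)))"

lemma indicator_expand:
  assumes "p > 0" "A \<subseteq> {..<p}" "x < p"
  shows "(\<Sum>h<p. e p (int h * int x) * F p A h) = of_nat p * of_bool (x \<in> A)"
proof -
  have fin: "finite A" using assms(2) finite_subset by blast
  have eq: "e p (int h * int x) * e p (-(int h * int u)) = e p (int h * (int x - int u))" for h u
    by (simp add: e_add[symmetric] right_diff_distrib)
  have "(\<Sum>h<p. e p (int h * int x) * F p A h) = (\<Sum>h<p. \<Sum>u\<in>A. e p (int h * (int x - int u)))"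
    unfolding F_def sum_distrib_left eq ..
  also have "\<dots> = (\<Sum>u\<in>A. \<Sum>h<p. e p (int h * (int x - int u)))"
    by (rule sum.swap)
  also have "\<dots> = (\<Sum>u\<in>A. if u = x then of_nat p else 0)"
  proof (rule sum.cong[OF refl])
    fix u assume "u \<in> A"
    then have "u < p" using assms by auto
    have "int p dvd (int x - int u) \<longleftrightarrow> u = x"
    proof
      assume "int p dvd (int x - int u)"
      then have "(int x) mod int p = (int u) mod int p" by (simp add: mod_eq_dvd_iff)
      then show "u = x" using \<open>u < p\<close> assms(3) by (simp add: zmod_int[symmetric])
    qed simp
    then show "(\<Sum>h<p. e p (int h * (int x - int u))) = (if u = x then of_nat p else 0)"
      using orth[OF assms(1)] by simp
  qed
  also have "\<dots> = of_nat p * of_bool (x \<in> A)" using fin by (simp add: sum.delta')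
  finally show ?thesis .
qed

lemma card_filter_sum:
  assumes "finite A"
  shows "(of_nat (card {x\<in>A. P x}) :: 'a::comm_semiring_1) = (\<Sum>x\<in>A. of_bool (P x))"
proof -
  have "(of_nat (card {x\<in>A. P x}) :: 'a) = (\<Sum>x\<in>{x\<in>A. P x}. 1)" by simp
  also have "\<dots> = (\<Sum>x\<in>A. if P x then 1 else 0)" using assms by (rule sum.inter_filter)
  finally show ?thesis by (simp add: of_bool_def)
qed

definition S :: "nat \<Rightarrow> (nat \<Rightarrow> nat) \<Rightarrow> nat \<Rightarrow> nat \<Rightarrow> complex" where
  "S p \<sigma> h l = (\<Sum>x<p. e p (int h * int x + int l * int (\<sigma> x)))"

lemma count_expand:
  assumes "p > 0" "I \<subseteq> {..<p}" "J \<subseteq> {..<p}" "\<sigma> ` {..<p} \<subseteq> {..<p}" "inj_on \<sigma> {..<p}"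
  shows "of_nat (card (\<sigma> ` I \<inter> J)) * (of_nat p)^2
     = (\<Sum>h<p. \<Sum>l<p. F p I h * F p J l * S p \<sigma> h l)"
proof -
  have "card (\<sigma> ` I \<inter> J) = card {x\<in>I. \<sigma> x \<in> J}"
  proof -
    have "\<sigma> ` I \<inter> J = \<sigma> ` {x\<in>I. \<sigma> x \<in> J}" by auto
    moreover have "inj_on \<sigma> {x\<in>I. \<sigma> x \<in> J}" by (rule inj_on_subset[OF assms(5)]) (use assms(2) in blast)
    ultimately show ?thesis by (metis card_image)
  qed
  also have "{x\<in>I. \<sigma> x \<in> J} = {x\<in>{..<p}. x \<in> I \<and> \<sigma> x \<in> J}" using assms(2) by blast
  finally have c0: "card (\<sigma> ` I \<inter> J) = card {x\<in>{..<p}. x \<in> I \<and> \<sigma> x \<in> J}" .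
  have c: "(of_nat (card (\<sigma> ` I \<inter> J)) :: complex)
      = (\<Sum>x<p. of_bool (x \<in> I) * of_bool (\<sigma> x \<in> J))"
    unfolding c0 card_filter_sum[OF finite_lessThan] of_bool_conj ..
  have "of_nat (card (\<sigma> ` I \<inter> J)) * (of_nat p)^2
      = (\<Sum>x<p. (of_nat p * of_bool (x \<in> I)) * (of_nat p * of_bool (\<sigma> x \<in> J)) :: complex)"
    unfolding c sum_distrib_right by (rule sum.cong[OF refl]) (simp add: power2_eq_square algebra_simps)
  also have "\<dots> = (\<Sum>x<p. (\<Sum>h<p. e p (int h * int x) * F p I h) * (\<Sum>l<p. e p (int l * int (\<sigma> x)) * F p J l))"
  proof (rule sum.cong[OF refl])
    fix x assume "x \<in> {..<p}"
    then have x: "x < p" "\<sigma> x < p" using assms(4) by auto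
    show "(of_nat p * of_bool (x \<in> I)) * (of_nat p * of_bool (\<sigma> x \<in> J))
      = (\<Sum>h<p. e p (int h * int x) * F p I h) * (\<Sum>l<p. e p (int l * int (\<sigma> x)) * F p J l)"
      using indicator_expand[OF assms(1) assms(2) x(1)] indicator_expand[OF assms(1) assms(3) x(2)] by simp
  qed
  also have "\<dots> = (\<Sum>x<p. \<Sum>h<p. \<Sum>l<p. F p I h * F p J l * e p (int h * int x + int l * int (\<sigma> x)))"
    unfolding sum_product by (intro sum.cong refl) (simp add: e_add mult_ac)
  also have "\<dots> = (\<Sum>h<p. \<Sum>x<p. \<Sum>l<p. F p I h * F p J l * e p (int h * int x + int l * int (\<sigma> x)))"
    by (rule sum.swap)
  also have "\<dots> = (\<Sum>h<p. \<Sum>l<p. \<Sum>x<p. F p I h * F p J l * e p (int h * int x + int l * int (\<sigma> x)))"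
    by (intro sum.cong refl sum.swap)
  also have "\<dots> = (\<Sum>h<p. \<Sum>l<p. F p I h * F p J l * S p \<sigma> h l)"
    by (simp only: S_def sum_distrib_left)
  finally show ?thesis .
qed

lemma S_h0:
  assumes "0 < h" "h < p" shows "S p \<sigma> h 0 = 0"
proof -
  have "\<not> int p dvd int h" using assms by (auto dest: zdvd_imp_le)
  then show ?thesis using orth[of p "int h"] assms unfolding S_def by (simp add: mult.commute)
qed

lemma S_0l:
  assumes "0 < l" "l < p" "bij_betw \<sigma> {..<p} {..<p}" shows "S p \<sigma> 0 l = 0"
proof -
  have "S p \<sigma> 0 l = (\<Sum>x<p. e p (int l * int (\<sigma> x)))" by (simp add: S_def)
  also have "\<dots> = (\<Sum>y<p. e p (int l * int y))"
    using sum.reindex_bij_betw[OF assms(3), of "\<lambda>y. e p (int l * int y)"] by simp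
  also have "\<dots> = 0"
  proof -
    have "\<not> int p dvd int l" using assms by (auto dest: zdvd_imp_le)
    then show ?thesis using orth[of p "int l"] assms by (simp add: mult.commute)
  qed
  finally show ?thesis .
qed

lemma S_00: "S p \<sigma> 0 0 = of_nat p" by (simp add: S_def)

lemma F_0: "finite A \<Longrightarrow> F p A 0 = of_nat (card A)" by (simp add: F_def)

lemma lessThan_insert0: "p > 0 \<Longrightarrow> {..<p} = insert 0 {1..<(p::nat)}" by auto

lemma err_identity:
  assumes "p > 0" "I \<subseteq> {..<p}" "J \<subseteq> {..<p}" "bij_betw \<sigma> {..<p} {..<p}"
  shows "of_nat (card (\<sigma> ` I \<inter> J)) * (of_nat p)^2
     = of_nat (card I) * of_nat (card J) * of_nat p
       + (\<Sum>h\<in>{1..<p}. \<Sum>l\<in>{1..<p}. F p I h * F p J l * S p \<sigma> h l)"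
proof -
  have fin: "finite I" "finite J" using assms finite_subset by blast+
  have inj: "inj_on \<sigma> {..<p}" and im: "\<sigma> ` {..<p} \<subseteq> {..<p}" using assms(4) unfolding bij_betw_def by auto
  have "of_nat (card (\<sigma> ` I \<inter> J)) * (of_nat p)^2
     = (\<Sum>h<p. \<Sum>l<p. F p I h * F p J l * S p \<sigma> h l)"
    by (rule count_expand[OF assms(1-3) im inj])
  also have "\<dots> = (\<Sum>l<p. F p I 0 * F p J l * S p \<sigma> 0 l)
      + (\<Sum>h\<in>{1..<p}. \<Sum>l<p. F p I h * F p J l * S p \<sigma> h l)"
    unfolding lessThan_insert0[OF assms(1)] by (subst sum.insert) auto
  also have "(\<Sum>l<p. F p I 0 * F p J l * S p \<sigma> 0 l) = F p I 0 * F p J 0 * S p \<sigma> 0 0"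
    unfolding lessThan_insert0[OF assms(1)] using S_0l[OF _ _ assms(4)]
    by (subst sum.insert) auto
  also have "(\<Sum>h\<in>{1..<p}. \<Sum>l<p. F p I h * F p J l * S p \<sigma> h l)
      = (\<Sum>h\<in>{1..<p}. \<Sum>l\<in>{1..<p}. F p I h * F p J l * S p \<sigma> h l)"
  proof (rule sum.cong[OF refl])
    fix h assume "h \<in> {1..<p}"
    then show "(\<Sum>l<p. F p I h * F p J l * S p \<sigma> h l) = (\<Sum>l\<in>{1..<p}. F p I h * F p J l * S p \<sigma> h l)"
      unfolding lessThan_insert0[OF assms(1)] using S_h0[of h p \<sigma>]
      by (subst sum.insert) auto
  qed
  finally show ?thesis using fin by (simp add: F_0 S_00)
qed

lemma discr_bound:
  assumes "p > 0" "I \<subseteq> {..<p}" "J \<subseteq> {..<p}" "bij_betw \<sigma> {..<p} {..<p}"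
    and SB: "\<And>h l. 0 < h \<Longrightarrow> h < p \<Longrightarrow> 0 < l \<Longrightarrow> l < p \<Longrightarrow> norm (S p \<sigma> h l) \<le> B"
    and FI: "(\<Sum>h\<in>{1..<p}. norm (F p I h)) \<le> G"
    and FJ: "(\<Sum>h\<in>{1..<p}. norm (F p J h)) \<le> G" and B0: "0 \<le> B"
  shows "discr p J (\<sigma> ` I) \<le> B * G^2 / (real p)^2"
proof -
  have fin: "finite I" "finite J" using assms finite_subset by blast+
  have inj: "inj_on \<sigma> I" using assms(2,4) bij_betw_def inj_on_subset by metis
  define R where "R = (\<Sum>h\<in>{1..<p}. \<Sum>l\<in>{1..<p}. F p I h * F p J l * S p \<sigma> h l)"
  have eq: "of_nat (card (\<sigma> ` I \<inter> J)) * (of_nat p)^2 = of_nat (card I) * of_nat (card J) * of_nat p + R"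
    unfolding R_def by (rule err_identity[OF assms(1-4)])
  have pp: "(of_nat p :: complex) \<noteq> 0" using assms by simp
  have ci: "card (\<sigma> ` I) = card I" using inj by (rule card_image)
  define a where "a = (of_nat (card (\<sigma> ` I \<inter> J)) :: complex)"
  define b where "b = (of_nat (card I) * of_nat (card J) :: complex)"
  define q where "q = (of_nat p :: complex)"
  have eq2: "a * q^2 = b * q + R" using eq unfolding a_def b_def q_def .
  have "a - b / q = R / q^2"
    using eq2 pp unfolding q_def[symmetric] by (simp add: field_simps power2_eq_square)
  moreover have "complex_of_real (real (card (\<sigma> ` I \<inter> J)) - real (card (\<sigma> ` I)) * real (card J) / real p)
      = a - b / q" unfolding a_def b_def q_def ci by simp
  ultimately have "complex_of_real (real (card (\<sigma> ` I \<inter> J)) - real (card (\<sigma> ` I)) * real (card J) / real p)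
      = R / (of_nat p)^2" unfolding q_def by simp
  then have d: "discr p J (\<sigma> ` I) = norm R / (real p)^2"
    unfolding discr_def by (metis norm_of_real norm_divide norm_of_nat norm_power)
  have "norm R \<le> (\<Sum>h\<in>{1..<p}. \<Sum>l\<in>{1..<p}. (B * norm (F p I h)) * norm (F p J l))"
    unfolding R_def
  proof (rule order_trans[OF norm_sum], rule sum_mono)
    fix h assume h: "h \<in> {1..<p}"
    show "norm (\<Sum>l\<in>{1..<p}. F p I h * F p J l * S p \<sigma> h l) \<le> (\<Sum>l\<in>{1..<p}. (B * norm (F p I h)) * norm (F p J l))"
    proof (rule order_trans[OF norm_sum], rule sum_mono)
      fix l assume l: "l \<in> {1..<p}"
      have "norm (S p \<sigma> h l) \<le> B" using h l SB by auto
      then have "norm (F p I h * F p J l * S p \<sigma> h l) \<le> norm (F p I h) * norm (F p J l) * B"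
        unfolding norm_mult by (intro mult_left_mono) auto
      then show "norm (F p I h * F p J l * S p \<sigma> h l) \<le> (B * norm (F p I h)) * norm (F p J l)"
        by (simp add: mult_ac)
    qed
  qed
  also have "\<dots> = B * ((\<Sum>h\<in>{1..<p}. norm (F p I h)) * (\<Sum>l\<in>{1..<p}. norm (F p J l)))"
    by (simp only: sum_product[symmetric] sum_distrib_left[symmetric] mult.assoc sum_distrib_right[symmetric])
  also have "\<dots> \<le> B * (G * G)"
  proof (rule mult_left_mono[OF _ B0], rule mult_mono[OF FI FJ])
    show "0 \<le> G" using FI sum_nonneg[of "{1..<p}" "\<lambda>h. norm (F p I h)"] by simp
    show "0 \<le> (\<Sum>l\<in>{1..<p}. norm (F p J l))" by (rule sum_nonneg) simp
  qed
  finally have "norm R \<le> B * G^2" by (simp add: power2_eq_square)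
  then show ?thesis unfolding d using assms(1) by (simp add: divide_right_mono)
qed

lemma harm_upper: "n \<ge> 1 \<Longrightarrow> (\<Sum>h\<in>{1..n}. 1 / real h) \<le> 1 + ln (real n)"
proof (induction n rule: nat_induct_at_least)
  case base then show ?case by simp
next
  case (Suc n)
  have n: "real n > 0" using Suc by simp
  have "ln (real n / real (Suc n)) \<le> real n / real (Suc n) - 1"
    by (rule ln_le_minus_one) (use n in simp)
  moreover have "real n / real (Suc n) - 1 = - (1 / real (Suc n))" by (simp add: field_simps)
  moreover have "ln (real n / real (Suc n)) = ln (real n) - ln (real (Suc n))"
    using n by (simp add: ln_divide_pos)
  ultimately have "1 / real (Suc n) \<le> ln (real (Suc n)) - ln (real n)" by linarith
  then show ?case using Suc by (simp add: sum.atLeast_Suc_atMost_Suc_shift del: of_nat_Suc)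
qed

lemma e_mult_mod: "p > 0 \<Longrightarrow> e p (c * (x mod int p)) = e p (c * x)"
  by (rule e_cong) (simp_all add: mod_mult_right_eq)

lemma zn_interval_image: "zn_interval n s L = (\<lambda>i. (s + i) mod n) ` {..<L}"
  unfolding zn_interval_def by auto

lemma zn_interval_inj:
  fixes s p L :: nat
  assumes "L \<le> p" shows "inj_on (\<lambda>i. (s + i) mod p) {..<L}"
proof (rule inj_onI)
  fix i j assume ij: "i \<in> {..<L}" "j \<in> {..<L}" and eq: "(s + i) mod p = (s + j) mod p"
  have "int (s + i) mod int p = int (s + j) mod int p" using eq by (metis zmod_int)
  then have "int p dvd (int i - int j)" by (simp add: mod_eq_dvd_iff)
  moreover have "\<bar>int i - int j\<bar> < int p" using ij assms by auto
  ultimately have "int i - int j = 0" using dvd_imp_le_int[of "int i - int j" "int p"] by force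
  then show "i = j" by simp
qed

lemma F_interval_bound:
  assumes "L \<le> p" "0 < h" "h < p"
  shows "norm (F p (zn_interval p s L) h) \<le> real p / real (min h (p - h))"
proof -
  have p: "p > 0" using assms by simp
  define z where "z = e p (- int h)"
  have "F p (zn_interval p s L) h = (\<Sum>i<L. e p (- (int h * int ((s + i) mod p))))"
    unfolding F_def zn_interval_image using zn_interval_inj[OF assms(1)] by (simp add: sum.reindex)
  also have "\<dots> = (\<Sum>i<L. e p (- (int h * int s)) * z ^ i)"
  proof (rule sum.cong[OF refl])
    fix i
    have "e p (- (int h * int ((s + i) mod p))) = cnj (e p (int h * (int (s + i) mod int p)))"
      by (simp add: e_neg zmod_int)
    also have "\<dots> = cnj (e p (int h * int (s + i)))" by (simp add: e_mult_mod p)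
    also have "\<dots> = e p (- (int h * int s) + int i * (- int h))" by (simp add: e_neg[symmetric] algebra_simps)
    also have "\<dots> = e p (- (int h * int s)) * e p (int i * (- int h))" by (simp only: e_add)
    also have "\<dots> = e p (- (int h * int s)) * z ^ i" by (simp add: z_def e_power)
    finally show "e p (- (int h * int ((s + i) mod p))) = e p (- (int h * int s)) * z ^ i" .
  qed
  also have "\<dots> = e p (- (int h * int s)) * (\<Sum>i<L. z ^ i)" by (simp add: sum_distrib_left)
  finally have Feq: "norm (F p (zn_interval p s L) h) = norm (\<Sum>i<L. z ^ i)" by (simp add: norm_mult)
  have ndvd: "\<not> int p dvd (- int h)" using assms by (auto dest: zdvd_imp_le)
  have z1: "z \<noteq> 1" unfolding z_def by (rule e_ne_1[OF p ndvd])
  have nz: "norm (z - 1) \<ge> 2 * real (min h (p - h)) / real p"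
  proof -
    have "norm (z - 1) = norm (cnj (1 - e p (int h)))" unfolding z_def e_neg
      by (metis complex_cnj_diff complex_cnj_one norm_minus_commute)
    also have "\<dots> = norm (1 - e p (int h))" by (rule complex_mod_cnj)
    finally show ?thesis using norm_1_minus_e[OF assms(2,3)] by simp
  qed
  have mpos: "2 * real (min h (p - h)) / real p > 0" using assms by simp
  have "norm (\<Sum>i<L. z ^ i) = norm (z ^ L - 1) / norm (z - 1)"
    using z1 by (simp add: geometric_sum norm_divide)
  also have "\<dots> \<le> 2 / norm (z - 1)"
  proof (rule divide_right_mono)
    have "norm (z ^ L - 1) \<le> norm (z ^ L) + norm (1::complex)" by (rule norm_triangle_ineq4)
    also have "norm (z ^ L) = 1" by (simp add: z_def norm_power)
    finally show "norm (z ^ L - 1) \<le> 2" by simp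
  qed simp
  also have "\<dots> \<le> 2 / (2 * real (min h (p - h)) / real p)"
  proof (rule divide_left_mono[OF nz])
    have "norm (z - 1) > 0" using nz mpos by linarith
    then show "0 < norm (z - 1) * (2 * real (min h (p - h)) / real p)" using mpos by (rule mult_pos_pos)
  qed simp
  also have "\<dots> = real p / real (min h (p - h))" using assms by (simp add: field_simps)
  finally show ?thesis using Feq by simp
qed

lemma inv_min_le: "0 < h \<Longrightarrow> h < p \<Longrightarrow> 1 / real (min h (p - h)) \<le> 1 / real h + 1 / real (p - h)"
  by (cases "h \<le> p - h") (auto simp: min_def)

lemma F_interval_sum:
  assumes "L \<le> p" "p \<ge> 2"
  shows "(\<Sum>h\<in>{1..<p}. norm (F p (zn_interval p s L) h)) \<le> 2 * real p * (1 + ln (real p))"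
proof -
  have "(\<Sum>h\<in>{1..<p}. norm (F p (zn_interval p s L) h))
      \<le> (\<Sum>h\<in>{1..<p}. real p * (1 / real h + 1 / real (p - h)))"
  proof (rule sum_mono)
    fix h assume h: "h \<in> {1..<p}"
    then have "norm (F p (zn_interval p s L) h) \<le> real p / real (min h (p - h))"
      using F_interval_bound[OF assms(1)] by auto
    also have "\<dots> = real p * (1 / real (min h (p - h)))" by simp
    also have "\<dots> \<le> real p * (1 / real h + 1 / real (p - h))"
      using inv_min_le[of h p] h by (intro mult_left_mono) auto
    finally show "norm (F p (zn_interval p s L) h) \<le> real p * (1 / real h + 1 / real (p - h))" .
  qed
  also have "\<dots> = real p * ((\<Sum>h\<in>{1..<p}. 1 / real h) + (\<Sum>h\<in>{1..<p}. 1 / real (p - h)))"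
    by (simp only: sum.distrib[symmetric] sum_distrib_left)
  also have "(\<Sum>h\<in>{1..<p}. 1 / real (p - h)) = (\<Sum>h\<in>{1..<p}. 1 / real h)"
    by (subst sum.atLeastLessThan_rev) (intro sum.cong refl, auto simp: of_nat_diff)
  finally have A: "(\<Sum>h\<in>{1..<p}. norm (F p (zn_interval p s L) h)) \<le> real p * (2 * (\<Sum>h\<in>{1..<p}. 1 / real h))"
    by simp
  have "(\<Sum>h\<in>{1..<p}. 1 / real h) \<le> (\<Sum>h\<in>{1..p}. 1 / real h)"
    by (rule sum_mono2) auto
  also have "\<dots> \<le> 1 + ln (real p)" using assms by (intro harm_upper) auto
  finally have "real p * (2 * (\<Sum>h\<in>{1..<p}. 1 / real h)) \<le> real p * (2 * (1 + ln (real p)))"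
    by (intro mult_left_mono) auto
  with A show ?thesis by (simp add: algebra_simps)
qed

lemma lagrange_roots:
  fixes p :: nat
  assumes "prime p"
  shows "degree f \<le> n \<Longrightarrow> \<not> int p dvd Polynomial.coeff f n \<Longrightarrow> card {x\<in>{..<p}. int p dvd poly f (int x)} \<le> n"
proof (induction n arbitrary: f)
  case 0
  then obtain a where a: "f = [:a:]" using degree0_coeffs[of f] by auto
  then have "poly f y = Polynomial.coeff f 0" for y by simp
  then show ?case using 0 by simp
next
  case (Suc n)
  show ?case
  proof (cases "{x\<in>{..<p}. int p dvd poly f (int x)} = {}")
    case True then show ?thesis by (metis card.empty zero_le)
  next
    case False
    then obtain r where r: "r < p" "int p dvd poly f (int r)" by auto
    define g where "g = synthetic_div f (int r)"
    have dg: "degree g \<le> n" using Suc.prems unfolding g_def degree_synthetic_div by simp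
    have sc: "f + Polynomial.smult (int r) g = pCons (poly f (int r)) g"
      unfolding g_def by (rule synthetic_div_correct)
    have "Polynomial.coeff (f + Polynomial.smult (int r) g) (Suc n) = Polynomial.coeff (pCons (poly f (int r)) g) (Suc n)"
      by (simp only: sc)
    moreover have "Polynomial.coeff g (Suc n) = 0" using dg by (simp add: coeff_eq_0)
    ultimately have cg: "Polynomial.coeff g n = Polynomial.coeff f (Suc n)" by simp
    have IH: "card {x\<in>{..<p}. int p dvd poly g (int x)} \<le> n"
      using Suc.IH[OF dg] Suc.prems(2) cg by simp
    have pe: "poly f y = (y - int r) * poly g y + poly f (int r)" for y
    proof -
      have "poly ([:- int r, 1:] * g + [:poly f (int r):]) y = poly f y"
        unfolding g_def by (simp only: synthetic_div_correct')
      then show ?thesis by (simp add: algebra_simps)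
    qed
    have sub: "{x\<in>{..<p}. int p dvd poly f (int x)} \<subseteq> insert r {x\<in>{..<p}. int p dvd poly g (int x)}"
    proof
      fix x assume x: "x \<in> {x\<in>{..<p}. int p dvd poly f (int x)}"
      then have "int p dvd (int x - int r) * poly g (int x)"
        using pe[of "int x"] r(2) by (metis (no_types, lifting) dvd_add_left_iff mem_Collect_eq)
      moreover have pp: "prime (int p)" using assms by simp
      ultimately have "int p dvd (int x - int r) \<or> int p dvd poly g (int x)"
        using prime_dvd_mult_iff by blast
      moreover have "int p dvd (int x - int r) \<Longrightarrow> x = r"
      proof -
        assume d: "int p dvd (int x - int r)"
        have "\<bar>int x - int r\<bar> < int p" using x r by auto
        then have "int x - int r = 0" using d dvd_imp_le_int[of "int x - int r" "int p"] by force
        then show "x = r" by simp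
      qed
      ultimately show "x \<in> insert r {x\<in>{..<p}. int p dvd poly g (int x)}" using x by auto
    qed
    have "card {x\<in>{..<p}. int p dvd poly f (int x)} \<le> card (insert r {x\<in>{..<p}. int p dvd poly g (int x)})"
      by (rule card_mono[OF _ sub]) simp
    also have "\<dots> \<le> Suc (card {x\<in>{..<p}. int p dvd poly g (int x)})" by (rule card_insert_le_m1) simp_all
    finally show ?thesis using IH by simp
  qed
qed

lemma coeff_linear_power_second:
  "Polynomial.coeff ([:c, 1:] ^ Suc n) n = of_nat (Suc n) * (c :: 'a :: comm_ring_1)"
proof (induction n)
  case 0 then show ?case by simp
next
  case (Suc n)
  have "[:c, 1:] ^ Suc (Suc n) = Polynomial.smult c ([:c, 1:] ^ Suc n) + pCons 0 ([:c, 1:] ^ Suc n)"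
  proof -
    have "[:c, 1:] ^ Suc (Suc n) = [:c, 1:] * [:c, 1:] ^ Suc n" by (rule power_Suc)
    also have "\<dots> = Polynomial.smult c ([:c, 1:] ^ Suc n) + pCons 0 ([:1:] * [:c, 1:] ^ Suc n)"
      by (rule mult_pCons_left)
    also have "[:1:] * [:c, 1:] ^ Suc n = [:c, 1:] ^ Suc n" by (simp only: one_pCons[symmetric] mult_1_left)
    finally show ?thesis .
  qed
  then have "Polynomial.coeff ([:c, 1:] ^ Suc (Suc n)) (Suc n) = c * Polynomial.coeff ([:c, 1:] ^ Suc n) (Suc n) + Polynomial.coeff ([:c, 1:] ^ Suc n) n"
    by simp
  also have "\<dots> = c + of_nat (Suc n) * c" by (simp only: coeff_linear_power Suc.IH mult_1_right)
  finally show ?case by (simp add: algebra_simps)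
qed

lemma root_count:
  fixes p k :: nat and c d :: int
  assumes "prime p" "2 \<le> k" "k < p" "\<not> int p dvd c"
  shows "card {x\<in>{..<p}. int p dvd ((int x)^k - (int x + c)^k + d)} \<le> k - 1"
proof -
  define q :: "int poly" where "q = Polynomial.monom 1 k - [:c, 1:]^k + [:d:]"
  have pq: "poly q y = y^k - (y + c)^k + d" for y by (simp add: q_def poly_monom algebra_simps)
  obtain m where m: "k = Suc m" using assms by (cases k) auto
  have "degree q \<le> k - 1"
  proof (rule degree_le)
    show "\<forall>i>k - 1. Polynomial.coeff q i = 0"
    proof (intro allI impI)
      fix i assume i: "i > k - 1"
      show "Polynomial.coeff q i = 0"
      proof (cases "i = k")
        case True
        have "Polynomial.coeff [:d:] k = 0" using m by simp
        with True show ?thesis by (simp add: q_def coeff_linear_power)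
      next
        case False
        then have "i > k" using i assms by simp
        moreover have "degree ([:c, 1:]^k) = k" by (rule degree_linear_power)
        ultimately show ?thesis using assms by (simp add: q_def coeff_eq_0 coeff_monom)
      qed
    qed
  qed
  moreover have "Polynomial.coeff q (k - 1) = - (int k * c)"
  proof -
    have c1: "Polynomial.coeff [:d:] (k - 1) = 0" using assms by (cases "k - 1") auto
    have c2: "Polynomial.coeff ([:c,1:]^k) (k - 1) = of_nat k * c"
      using coeff_linear_power_second[of c m] by (simp only: m diff_Suc_1)
    have c3: "Polynomial.coeff (Polynomial.monom 1 k) (k - 1) = 0" using assms by (simp add: coeff_monom m)
    show ?thesis unfolding q_def coeff_diff coeff_add c1 c2 c3 by simp
  qed
  moreover have "\<not> int p dvd (- (int k * c))"
  proof
    assume "int p dvd - (int k * c)"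
    then have "int p dvd int k * c" by simp
    moreover have "prime (int p)" using assms(1) by simp
    ultimately have "int p dvd int k \<or> int p dvd c" using prime_dvd_mult_iff by blast
    then show False using assms by (auto dest: zdvd_imp_le)
  qed
  ultimately have "card {x\<in>{..<p}. int p dvd poly q (int x)} \<le> k - 1"
    using lagrange_roots[OF assms(1)] by simp
  then show ?thesis by (simp add: pq)
qed

lemma norm_sq_complex: "complex_of_real ((norm W)^2) = W * cnj W"
  by (rule complex_norm_square)

lemma parseval2:
  fixes s t :: "'q \<Rightarrow> int"
  assumes p: "p > 0" and fin: "finite Q"
  shows "(\<Sum>h<p. \<Sum>l<p. (norm (\<Sum>q\<in>Q. e p (int h * s q + int l * t q)))^2)
    = real p ^ 2 * real (card {yz\<in>Q \<times> Q. int p dvd s (fst yz) - s (snd yz) \<and> int p dvd t (fst yz) - t (snd yz)})"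
proof -
  define g where "g h l yz = e p (int h * (s (fst yz) - s (snd yz))) * e p (int l * (t (fst yz) - t (snd yz)))" for h l yz
  have sq: "complex_of_real ((norm (\<Sum>q\<in>Q. e p (int h * s q + int l * t q)))^2) = (\<Sum>yz\<in>Q \<times> Q. g h l yz)" for h l
  proof -
    have "complex_of_real ((norm (\<Sum>q\<in>Q. e p (int h * s q + int l * t q)))^2)
       = (\<Sum>y\<in>Q. e p (int h * s y + int l * t y)) * (\<Sum>z\<in>Q. e p (- (int h * s z + int l * t z)))"
      unfolding norm_sq_complex cnj_sum by (simp only: e_neg)
    also have "\<dots> = (\<Sum>y\<in>Q. \<Sum>z\<in>Q. g h l (y, z))"
      unfolding sum_product g_def by (intro sum.cong refl) (simp add: e_add[symmetric] algebra_simps)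
    also have "\<dots> = (\<Sum>yz\<in>Q \<times> Q. g h l yz)" unfolding sum.cartesian_product by simp
    finally show ?thesis .
  qed
  have "complex_of_real (\<Sum>h<p. \<Sum>l<p. (norm (\<Sum>q\<in>Q. e p (int h * s q + int l * t q)))^2)
      = (\<Sum>h<p. \<Sum>l<p. \<Sum>yz\<in>Q \<times> Q. g h l yz)"
    by (simp only: of_real_sum sq)
  also have "\<dots> = (\<Sum>h<p. \<Sum>yz\<in>Q \<times> Q. \<Sum>l<p. g h l yz)"
    by (intro sum.cong refl sum.swap)
  also have "\<dots> = (\<Sum>yz\<in>Q \<times> Q. \<Sum>h<p. \<Sum>l<p. g h l yz)"
    by (rule sum.swap)
  also have "\<dots> = (\<Sum>yz\<in>Q \<times> Q. (\<Sum>h<p. e p (int h * (s (fst yz) - s (snd yz)))) * (\<Sum>l<p. e p (int l * (t (fst yz) - t (snd yz)))))"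
    unfolding g_def sum_product ..
  also have "\<dots> = (\<Sum>yz\<in>Q \<times> Q. of_bool (int p dvd s (fst yz) - s (snd yz) \<and> int p dvd t (fst yz) - t (snd yz)) * (of_nat p)^2)"
    by (intro sum.cong refl) (simp add: orth[OF p] power2_eq_square)
  also have "\<dots> = of_nat (card {yz\<in>Q \<times> Q. int p dvd s (fst yz) - s (snd yz) \<and> int p dvd t (fst yz) - t (snd yz)}) * (of_nat p)^2"
    by (simp add: sum_distrib_right[symmetric] card_filter_sum fin)
  finally have "complex_of_real (\<Sum>h<p. \<Sum>l<p. (norm (\<Sum>q\<in>Q. e p (int h * s q + int l * t q)))^2)
      = complex_of_real (real p ^ 2 * real (card {yz\<in>Q \<times> Q. int p dvd s (fst yz) - s (snd yz) \<and> int p dvd t (fst yz) - t (snd yz)}))"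
    by simp
  then show ?thesis by (simp only: of_real_eq_iff)
qed

lemma small_dvd_eq:
  fixes x y p :: nat
  assumes "x < p" "y < p" "int p dvd int x - int y" shows "x = y"
proof -
  have "\<bar>int x - int y\<bar> < int p" using assms by auto
  then have "int x - int y = 0" using assms(3) dvd_imp_le_int[of "int x - int y" "int p"] by force
  then show ?thesis by simp
qed

definition Rset :: "nat \<Rightarrow> nat \<Rightarrow> nat \<Rightarrow> nat \<Rightarrow> nat set" where
  "Rset p k x1 x3 = {x2\<in>{..<p}. int p dvd ((int x2)^k - (int x2 + (int x1 - int x3))^k + ((int x1)^k - (int x3)^k))}"

lemma N_bound:
  fixes p k :: nat and A :: int
  assumes pr: "prime p" and k: "2 \<le> k" "k < p" and A: "\<not> int p dvd A"
  shows "card {yz\<in>({..<p} \<times> {..<p}) \<times> ({..<p} \<times> {..<p}).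
      int p dvd (int (fst (fst yz)) + int (snd (fst yz))) - (int (fst (snd yz)) + int (snd (snd yz)))
    \<and> int p dvd (A * int (fst (fst yz))^k + A * int (snd (fst yz))^k) - (A * int (fst (snd yz))^k + A * int (snd (snd yz))^k)}
    \<le> k * p^2"
  (is "card ?N \<le> _")
proof -
  have ppr: "prime (int p)" using pr by simp
  define \<phi> where "\<phi> yz = (fst (fst yz), (fst (snd yz), snd (fst yz)))" for yz :: "(nat \<times> nat) \<times> (nat \<times> nat)"
  have inj: "inj_on \<phi> ?N"
  proof (rule inj_onI)
    fix u v assume u: "u \<in> ?N" and v: "v \<in> ?N" and eq: "\<phi> u = \<phi> v"
    obtain x1 x2 x3 x4 where uu: "u = ((x1, x2), (x3, x4))" by (metis prod.collapse)
    obtain y1 y2 y3 y4 where vv: "v = ((y1, y2), (y3, y4))" by (metis prod.collapse)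
    have e1: "x1 = y1" "x3 = y3" "x2 = y2" using eq by (auto simp: \<phi>_def uu vv)
    have d1: "int p dvd (int x1 + int x2) - (int x3 + int x4)" using u uu by simp
    have d2: "int p dvd (int x1 + int x2) - (int x3 + int y4)" using v vv e1 by simp
    have "int p dvd ((int x1 + int x2) - (int x3 + int y4)) - ((int x1 + int x2) - (int x3 + int x4))"
      using d2 d1 by (rule dvd_diff)
    then have "int p dvd int x4 - int y4" by (simp add: algebra_simps)
    moreover have "x4 < p" "y4 < p" using u v uu vv by auto
    ultimately have "x4 = y4" using small_dvd_eq by blast
    then show "u = v" using uu vv e1 by simp
  qed
  have sub: "\<phi> ` ?N \<subseteq> Sigma {..<p} (\<lambda>x1. Sigma {..<p} (\<lambda>x3. Rset p k x1 x3))"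
  proof
    fix w assume "w \<in> \<phi> ` ?N"
    then obtain u where u: "u \<in> ?N" and w: "w = \<phi> u" by auto
    obtain x1 x2 x3 x4 where uu: "u = ((x1, x2), (x3, x4))" by (metis prod.collapse)
    have lt: "x1 < p" "x2 < p" "x3 < p" "x4 < p" using u uu by auto
    have d1: "int p dvd (int x1 + int x2) - (int x3 + int x4)" using u uu by simp
    have d2: "int p dvd A * ((int x1)^k + (int x2)^k - (int x3)^k - (int x4)^k)"
      using u uu by (simp add: algebra_simps)
    have d3: "int p dvd ((int x1)^k + (int x2)^k - (int x3)^k - (int x4)^k)"
      using d2 A ppr prime_dvd_mult_iff by blast
    have "[int x4 = int x2 + (int x1 - int x3)] (mod int p)"
      using d1 by (simp add: cong_iff_dvd_diff algebra_simps dvd_diff_commute)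
    then have "[(int x4)^k = (int x2 + (int x1 - int x3))^k] (mod int p)" by (rule cong_pow)
    then have d4: "int p dvd (int x4)^k - (int x2 + (int x1 - int x3))^k" by (simp add: cong_iff_dvd_diff)
    have "int p dvd ((int x1)^k + (int x2)^k - (int x3)^k - (int x4)^k) + ((int x4)^k - (int x2 + (int x1 - int x3))^k)"
      using d3 d4 by (rule dvd_add)
    then have "x2 \<in> Rset p k x1 x3" using lt unfolding Rset_def by (simp add: algebra_simps)
    then show "w \<in> Sigma {..<p} (\<lambda>x1. Sigma {..<p} (\<lambda>x3. Rset p k x1 x3))"
      using w uu lt by (simp add: \<phi>_def)
  qed
  have Rb: "card (Rset p k x1 x3) \<le> p * of_bool (x3 = x1) + (k - 1)" if "x1 < p" "x3 < p" for x1 x3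
  proof (cases "x3 = x1")
    case True
    have "card (Rset p k x1 x3) \<le> card {..<p}" by (rule card_mono) (auto simp: Rset_def)
    then show ?thesis using True by simp
  next
    case False
    have "\<not> int p dvd (int x1 - int x3)" using small_dvd_eq[of x1 p x3] that False by auto
    then have "card (Rset p k x1 x3) \<le> k - 1" unfolding Rset_def
      using root_count[OF pr k] by blast
    then show ?thesis by simp
  qed
  have "card ?N = card (\<phi> ` ?N)" using inj by (simp add: card_image)
  also have "\<dots> \<le> card (Sigma {..<p} (\<lambda>x1. Sigma {..<p} (\<lambda>x3. Rset p k x1 x3)))"
    by (rule card_mono[OF _ sub]) (auto simp: Rset_def intro!: finite_SigmaI)
  also have "\<dots> = (\<Sum>x1<p. \<Sum>x3<p. card (Rset p k x1 x3))"
    by (simp add: Rset_def)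
  also have "\<dots> \<le> (\<Sum>x1<p. \<Sum>x3<p. p * of_bool (x3 = x1) + (k - 1))"
    using Rb by (intro sum_mono) auto
  also have "\<dots> = (\<Sum>x1<p. p + p * (k - 1))"
    by (simp add: sum.distrib sum_distrib_left[symmetric] of_bool_def sum.If_cases)
  also have "\<dots> = k * p^2" using k by (simp add: power2_eq_square algebra_simps)
  finally show ?thesis .
qed

lemma pow_fermat_gen:
  fixes p x m :: nat
  assumes "prime p"
  shows "[x ^ (1 + m * (p - 1)) = x] (mod p)"
proof (cases "p dvd x")
  case True
  then have "p dvd x ^ (1 + m * (p - 1))" by (simp add: dvd_power_iff)
  then show ?thesis using True by (simp add: cong_def dvd_eq_mod_eq_0)
next
  case False
  have "[x ^ (p - 1) = 1] (mod p)" by (rule fermat_theorem[OF assms False])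
  then have "[(x ^ (p - 1)) ^ m = 1 ^ m] (mod p)" by (rule cong_pow)
  then have "[(x ^ (p - 1)) ^ m = 1] (mod p)" by simp
  then have "[x * (x ^ (p - 1)) ^ m = x * 1] (mod p)" by (rule cong_scalar_left)
  then show ?thesis by (simp add: power_add power_mult mult.commute[of m])
qed

lemma eta_inj:
  fixes p a k :: nat
  assumes pr: "prime p" and a: "\<not> p dvd a" and cop: "coprime k (p - 1)" and p3: "p \<ge> 3"
  shows "inj_on (eta p a k) {..<p}"
proof (rule inj_onI)
  fix x y assume x: "x \<in> {..<p}" and y: "y \<in> {..<p}" and eq: "eta p a k x = eta p a k y"
  obtain k' where k': "[k * k' = Suc 0] (mod (p - 1))" using cong_solve_coprime_nat[OF cop] by blast
  have "(k * k') mod (p - 1) = 1" using k' p3 by (simp add: cong_def)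
  then obtain m where m: "k * k' = 1 + m * (p - 1)" by (metis div_mult_mod_eq add.commute)
  have "[a * x ^ k = a * y ^ k] (mod p)" using eq by (simp add: eta_def cong_def)
  moreover have "coprime a p" using pr a by (metis coprime_commute prime_imp_coprime)
  ultimately have "[x ^ k = y ^ k] (mod p)" by (simp add: cong_mult_lcancel_nat)
  then have "[(x ^ k) ^ k' = (y ^ k) ^ k'] (mod p)" by (rule cong_pow)
  then have "[x ^ (1 + m * (p - 1)) = y ^ (1 + m * (p - 1))] (mod p)" by (simp add: power_mult[symmetric] m)
  then have "[x = y] (mod p)"
    using pow_fermat_gen[OF pr, of x m] pow_fermat_gen[OF pr, of y m]
    by (meson cong_sym cong_trans)
  then show "x = y" using x y cong_less_modulus_unique_nat by auto
qed

lemma eta_bij: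
  fixes p a k :: nat
  assumes "prime p" "\<not> p dvd a" "coprime k (p - 1)" "p \<ge> 3"
  shows "bij_betw (eta p a k) {..<p} {..<p}"
proof -
  have inj: "inj_on (eta p a k) {..<p}" by (rule eta_inj[OF assms])
  have sub: "eta p a k ` {..<p} \<subseteq> {..<p}" using assms by (auto simp: eta_def prime_gt_0_nat)
  have "eta p a k ` {..<p} = {..<p}" by (rule endo_inj_surj[OF _ sub inj]) simp
  then show ?thesis using inj by (simp add: bij_betw_def)
qed

definition Tsum :: "nat \<Rightarrow> int \<Rightarrow> nat \<Rightarrow> int \<Rightarrow> int \<Rightarrow> complex" where
  "Tsum p A k h l = (\<Sum>x<p. e p (h * int x + l * (A * int x ^ k)))"

lemma e_poly_cong:
  assumes "p > 0" "[z1 = z2] (mod int p)" "[h1 = h2] (mod int p)" "[l1 = l2] (mod int p)"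
  shows "e p (h1 * z1 + l1 * (A * z1 ^ k)) = e p (h2 * z2 + l2 * (A * z2 ^ k))"
proof (rule e_cong[OF assms(1)])
  have "[h1 * z1 + l1 * (A * z1 ^ k) = h2 * z2 + l2 * (A * z2 ^ k)] (mod int p)"
    using assms by (intro cong_add cong_mult cong_pow cong_refl) auto
  then show "(h1 * z1 + l1 * (A * z1 ^ k)) mod int p = (h2 * z2 + l2 * (A * z2 ^ k)) mod int p"
    by (simp add: cong_def)
qed

lemma S_eq_T:
  assumes "p > 0" shows "S p (eta p a k) h l = Tsum p (int a) k (int h) (int l)"
  unfolding S_def Tsum_def
proof (rule sum.cong[OF refl])
  fix x
  have "int (eta p a k x) = (int a * int x ^ k) mod int p" by (simp add: eta_def zmod_int)
  then have "[int (eta p a k x) = int a * int x ^ k] (mod int p)" by (simp add: cong_def)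
  then have "[int h * int x + int l * int (eta p a k x) = int h * int x + int l * (int a * int x ^ k)] (mod int p)"
    by (intro cong_add cong_mult cong_refl)
  then show "e p (int h * int x + int l * int (eta p a k x)) = e p (int h * int x + int l * (int a * int x ^ k))"
    using assms by (intro e_cong) (auto simp: cong_def)
qed

lemma T_mod:
  assumes "p > 0" shows "Tsum p A k h l = Tsum p A k (h mod int p) (l mod int p)"
  unfolding Tsum_def
  by (rule sum.cong[OF refl], rule e_poly_cong[OF assms]) (auto simp: cong_def)

lemma mult_mod_bij:
  fixes p c :: nat
  assumes pr: "prime p" and "0 < c" "c < p"
  shows "bij_betw (\<lambda>y. (c * y) mod p) {..<p} {..<p}"
proof -
  have cop: "coprime c p" using assms
    by (metis coprime_commute prime_imp_coprime dvd_imp_le not_le)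
  have inj: "inj_on (\<lambda>y. (c * y) mod p) {..<p}"
  proof (rule inj_onI)
    fix x y assume x: "x \<in> {..<p}" and y: "y \<in> {..<p}" and eq: "(c * x) mod p = (c * y) mod p"
    then have "[c * x = c * y] (mod p)" by (simp add: cong_def)
    then have "[x = y] (mod p)" using cop by (simp add: cong_mult_lcancel_nat)
    then show "x = y" using x y cong_less_modulus_unique_nat by auto
  qed
  have sub: "(\<lambda>y. (c * y) mod p) ` {..<p} \<subseteq> {..<p}" using assms by (auto simp: prime_gt_0_nat)
  have "(\<lambda>y. (c * y) mod p) ` {..<p} = {..<p}" by (rule endo_inj_surj[OF _ sub inj]) simp
  then show ?thesis using inj by (simp add: bij_betw_def)
qed

lemma T_scale:
  fixes p c :: nat
  assumes pr: "prime p" and "0 < c" "c < p"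
  shows "Tsum p A k h l = Tsum p A k (int c * h) (int c ^ k * l)"
proof -
  have p: "p > 0" using pr prime_gt_0_nat by blast
  define f where "f x = e p (h * int x + l * (A * int x ^ k))" for x :: nat
  have "Tsum p A k h l = (\<Sum>x<p. f x)" by (simp add: Tsum_def f_def)
  also have "\<dots> = (\<Sum>y<p. f ((c * y) mod p))"
    by (rule sum.reindex_bij_betw[OF mult_mod_bij[OF assms], symmetric])
  also have "\<dots> = (\<Sum>y<p. e p ((int c * h) * int y + (int c ^ k * l) * (A * int y ^ k)))"
  proof (rule sum.cong[OF refl])
    fix y
    have "f ((c * y) mod p) = e p (h * (int c * int y) + l * (A * (int c * int y) ^ k))"
      unfolding f_def by (rule e_poly_cong[OF p]) (auto simp: cong_def zmod_int)
    also have "h * (int c * int y) + l * (A * (int c * int y) ^ k) = (int c * h) * int y + (int c ^ k * l) * (A * int y ^ k)"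
      by (simp add: power_mult_distrib algebra_simps)
    finally show "f ((c * y) mod p) = e p ((int c * h) * int y + (int c ^ k * l) * (A * int y ^ k))" .
  qed
  also have "\<dots> = Tsum p A k (int c * h) (int c ^ k * l)" by (simp add: Tsum_def)
  finally show ?thesis .
qed

lemma fourth_moment:
  fixes p k :: nat and A :: int
  assumes pr: "prime p" and k: "2 \<le> k" "k < p" and A: "\<not> int p dvd A"
  shows "(\<Sum>h<p. \<Sum>l<p. norm (Tsum p A k (int h) (int l)) ^ 4) \<le> real k * real p ^ 4"
proof -
  have p: "p > 0" using pr prime_gt_0_nat by blast
  define Q where "Q = {..<p} \<times> {..<p}"
  define s where "s q = int (fst q) + int (snd q)" for q :: "nat \<times> nat"
  define t where "t q = A * int (fst q) ^ k + A * int (snd q) ^ k" for q :: "nat \<times> nat"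
  have sq: "Tsum p A k (int h) (int l) ^ 2 = (\<Sum>q\<in>Q. e p (int h * s q + int l * t q))" for h l
  proof -
    have "Tsum p A k (int h) (int l) ^ 2 = (\<Sum>x1<p. \<Sum>x2<p. e p (int h * int x1 + int l * (A * int x1 ^ k)) * e p (int h * int x2 + int l * (A * int x2 ^ k)))"
      unfolding Tsum_def power2_eq_square sum_product ..
    also have "\<dots> = (\<Sum>x1<p. \<Sum>x2<p. e p (int h * s (x1, x2) + int l * t (x1, x2)))"
      by (intro sum.cong refl) (simp add: s_def t_def e_add[symmetric] algebra_simps)
    also have "\<dots> = (\<Sum>q\<in>Q. e p (int h * s q + int l * t q))"
      unfolding Q_def sum.cartesian_product by (simp add: case_prod_beta')
    finally show ?thesis .
  qed
  have "(\<Sum>h<p. \<Sum>l<p. norm (Tsum p A k (int h) (int l)) ^ 4)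
      = (\<Sum>h<p. \<Sum>l<p. (norm (\<Sum>q\<in>Q. e p (int h * s q + int l * t q)))^2)"
  proof (intro sum.cong refl)
    fix h l
    have "norm (Tsum p A k (int h) (int l)) ^ 4 = (norm (Tsum p A k (int h) (int l) ^ 2))^2"
      by (simp add: norm_power power_mult[symmetric])
    then show "norm (Tsum p A k (int h) (int l)) ^ 4 = (norm (\<Sum>q\<in>Q. e p (int h * s q + int l * t q)))^2"
      by (simp only: sq)
  qed
  also have "\<dots> = real p ^ 2 * real (card {yz\<in>Q \<times> Q. int p dvd s (fst yz) - s (snd yz) \<and> int p dvd t (fst yz) - t (snd yz)})"
    by (rule parseval2[OF p]) (simp add: Q_def)
  also have "card {yz\<in>Q \<times> Q. int p dvd s (fst yz) - s (snd yz) \<and> int p dvd t (fst yz) - t (snd yz)} \<le> k * p^2"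
    unfolding Q_def s_def t_def by (rule N_bound[OF pr k A])
  then have "real p ^ 2 * real (card {yz\<in>Q \<times> Q. int p dvd s (fst yz) - s (snd yz) \<and> int p dvd t (fst yz) - t (snd yz)})
      \<le> real p ^ 2 * real (k * p^2)"
    by (intro mult_left_mono) (simp_all only: of_nat_le_iff zero_le_power2)
  finally show ?thesis by (simp add: algebra_simps power2_eq_square power4_eq_xxxx)
qed

lemma powr_quarter_pow4: "(x::real) > 0 \<Longrightarrow> (x powr (1/4)) ^ 4 = x"
  by (simp add: powr_power)

lemma powr_3quarter_pow4: "(x::real) > 0 \<Longrightarrow> (x powr (3/4)) ^ 4 = x ^ 3"
proof -
  assume x: "x > 0"
  have "(x powr (3/4)) ^ 4 = x powr (real 4 * (3/4))" using x by (simp add: powr_power)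
  also have "\<dots> = x powr (real 3)" by simp
  also have "\<dots> = x ^ 3" using x by (rule powr_realpow)
  finally show ?thesis .
qed

lemma T_bound:
  fixes p k h l :: nat and A :: int
  assumes pr: "prime p" and k: "2 \<le> k" "k < p" and A: "\<not> int p dvd A"
    and h: "0 < h" "h < p" and l: "0 < l" "l < p"
  shows "norm (Tsum p A k (int h) (int l)) \<le> 2 * real k powr (1/4) * real p powr (3/4)"
proof -
  have p: "p > 0" using pr prime_gt_0_nat by blast
  have p2: "p \<ge> 2" using pr prime_ge_2_nat by blast
  have ppr: "prime (int p)" using pr by simp
  define G where "G uv = norm (Tsum p A k (int (fst uv)) (int (snd uv))) ^ 4" for uv :: "nat \<times> nat"
  define \<pi> where "\<pi> c = (nat ((int c * int h) mod int p), nat ((int c ^ k * int l) mod int p))" for c :: nat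
  have Gpi: "G (\<pi> c) = norm (Tsum p A k (int h) (int l)) ^ 4" if c: "c \<in> {1..<p}" for c
  proof -
    have "Tsum p A k (int h) (int l) = Tsum p A k (int c * int h) (int c ^ k * int l)"
      using c by (intro T_scale[OF pr]) auto
    also have "\<dots> = Tsum p A k ((int c * int h) mod int p) ((int c ^ k * int l) mod int p)"
      by (rule T_mod[OF p])
    finally show ?thesis using p by (simp add: G_def \<pi>_def)
  qed
  have hnd: "\<not> int p dvd int h" using h by (auto dest: zdvd_imp_le)
  have inj: "inj_on \<pi> {1..<p}"
  proof (rule inj_onI)
    fix c c' assume c: "c \<in> {1..<p}" and c': "c' \<in> {1..<p}" and eq: "\<pi> c = \<pi> c'"
    then have "(int c * int h) mod int p = (int c' * int h) mod int p"
      using p by (simp add: \<pi>_def nat_eq_iff2)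
    then have "int p dvd (int c - int c') * int h" by (simp add: mod_eq_dvd_iff algebra_simps)
    then have "int p dvd (int c - int c')" using hnd ppr prime_dvd_mult_iff by blast
    then show "c = c'" using small_dvd_eq[of c p c'] c c' by auto
  qed
  have sub: "\<pi> ` {1..<p} \<subseteq> {..<p} \<times> {..<p}"
    using p by (auto simp: \<pi>_def nat_less_iff)
  have "real (p - 1) * norm (Tsum p A k (int h) (int l)) ^ 4 = (\<Sum>c\<in>{1..<p}. G (\<pi> c))"
    using Gpi by simp
  also have "\<dots> = (\<Sum>uv\<in>\<pi> ` {1..<p}. G uv)" unfolding sum.reindex[OF inj] comp_def ..
  also have "\<dots> \<le> (\<Sum>uv\<in>{..<p} \<times> {..<p}. G uv)"
    by (rule sum_mono2[OF _ sub]) (auto simp: G_def)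
  also have "\<dots> = (\<Sum>u<p. \<Sum>v<p. norm (Tsum p A k (int u) (int v)) ^ 4)"
    by (simp add: sum.cartesian_product G_def case_prod_beta')
  also have "\<dots> \<le> real k * real p ^ 4" by (rule fourth_moment[OF pr k A])
  finally have ineq: "real (p - 1) * norm (Tsum p A k (int h) (int l)) ^ 4 \<le> real k * real p ^ 4" .
  have "real k * real p ^ 4 \<le> real (p - 1) * (16 * real k * real p ^ 3)"
  proof -
    have "real p \<le> 16 * real (p - 1)" using p2 by (simp add: of_nat_diff)
    then have "real p * (real k * real p ^ 3) \<le> 16 * real (p - 1) * (real k * real p ^ 3)"
      by (intro mult_right_mono) auto
    then show ?thesis by (simp add: power_eq_if algebra_simps)
  qed
  with ineq have "real (p - 1) * norm (Tsum p A k (int h) (int l)) ^ 4 \<le> real (p - 1) * (16 * real k * real p ^ 3)"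
    by linarith
  moreover have "real (p - 1) > 0" using p2 by simp
  ultimately have n4: "norm (Tsum p A k (int h) (int l)) ^ 4 \<le> 16 * real k * real p ^ 3"
    by (simp add: mult_le_cancel_left_pos)
  have kp: "real k > 0" "real p > 0" using k p by auto
  have "(2 * real k powr (1/4) * real p powr (3/4)) ^ 4 = 16 * real k * real p ^ 3"
    by (simp add: power_mult_distrib powr_quarter_pow4[OF kp(1)] powr_3quarter_pow4[OF kp(2)])
  with n4 have "norm (Tsum p A k (int h) (int l)) ^ 4 \<le> (2 * real k powr (1/4) * real p powr (3/4)) ^ 4"
    by simp
  then show ?thesis
    using power_le_imp_le_base[where n=3 and a="norm (Tsum p A k (int h) (int l))" and b="2 * real k powr (1/4) * real p powr (3/4)"]
    by simp
qed

lemma zn_intervals_finite: "finite (zn_intervals n)"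
proof -
  have "zn_intervals n \<subseteq> (\<lambda>(s, L). zn_interval n s L) ` ({..<n} \<times> {..n})"
    unfolding zn_intervals_def by auto
  then show ?thesis by (rule finite_subset) simp
qed

lemma zn_interval_sub: "n > 0 \<Longrightarrow> zn_interval n s L \<subseteq> {..<n}"
  unfolding zn_interval_def by auto

lemma main_bound:
  fixes p a k :: nat and I J :: "nat set"
  assumes pr: "prime p" and a: "a \<in> {1..<p}" and k: "2 \<le> k" "k \<le> p - 2" and cop: "coprime k (p - 1)"
    and I: "I \<in> zn_intervals p" and J: "J \<in> zn_intervals p"
  shows "discr p J (eta p a k ` I) \<le> 32 * real k powr (1/4) * real p powr (3/4) * (ln (real p))\<^sup>2"
proof -
  have p2: "p \<ge> 2" using pr prime_ge_2_nat by blast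
  have p4: "p \<ge> 4" using k by linarith
  have p: "p > 0" using p2 by simp
  have kp: "k < p" using k p4 by linarith
  have and': "\<not> p dvd a" using a by (auto dest: dvd_imp_le)
  have And: "\<not> int p dvd int a" using and' by simp
  have bij: "bij_betw (eta p a k) {..<p} {..<p}" using eta_bij[OF pr and' cop] p4 by simp
  obtain s L where Ieq: "I = zn_interval p s L" and L: "L \<le> p" using I unfolding zn_intervals_def by auto
  obtain s' L' where Jeq: "J = zn_interval p s' L'" and L': "L' \<le> p" using J unfolding zn_intervals_def by auto
  define B where "B = 2 * real k powr (1/4) * real p powr (3/4)"
  define G where "G = 2 * real p * (1 + ln (real p))"
  have B0: "0 \<le> B" unfolding B_def by simp
  have SB: "norm (S p (eta p a k) h l) \<le> B" if "0 < h" "h < p" "0 < l" "l < p" for h l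
    unfolding S_eq_T[OF p] B_def using T_bound[OF pr k(1) kp And that] .
  have FI: "(\<Sum>h\<in>{1..<p}. norm (F p I h)) \<le> G" unfolding Ieq G_def by (rule F_interval_sum[OF L p2])
  have FJ: "(\<Sum>h\<in>{1..<p}. norm (F p J h)) \<le> G" unfolding Jeq G_def by (rule F_interval_sum[OF L' p2])
  have "discr p J (eta p a k ` I) \<le> B * G^2 / (real p)^2"
    by (rule discr_bound[OF p _ _ bij SB FI FJ B0]) (auto simp: Ieq Jeq zn_interval_sub[OF p])
  also have "B * G^2 / (real p)^2 = 4 * B * (1 + ln (real p))^2"
  proof -
    have G2: "G^2 = (real p)^2 * (4 * (1 + ln (real p))^2)" by (simp add: G_def power_mult_distrib)
    have "(real p)^2 \<noteq> 0" using p by simp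
    then show ?thesis unfolding G2 by simp
  qed
  also have "\<dots> \<le> 4 * B * (2 * ln (real p))^2"
  proof -
    have r4: "(4::real) \<le> real p" using p4 by simp
    have "exp 1 \<le> real p" using exp_le r4 by linarith
    then have "1 \<le> ln (real p)" using p by (simp add: ln_ge_iff)
    then have "0 \<le> 1 + ln (real p)" "1 + ln (real p) \<le> 2 * ln (real p)" by auto
    then have "(1 + ln (real p))^2 \<le> (2 * ln (real p))^2" by (intro power_mono) auto
    then show ?thesis using B0 by (intro mult_left_mono) auto
  qed
  also have "\<dots> = 32 * real k powr (1/4) * real p powr (3/4) * (ln (real p))\<^sup>2"
    by (simp add: B_def power_mult_distrib)
  finally show ?thesis .
qed

theorem mainTheorem8:
  shows "\<exists>C::real. \<forall>(p::nat) (a::nat) (k::nat).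
    prime p \<and> a \<in> {1..<p} \<and> 2 \<le> k \<and> k \<le> p - 2 \<and> coprime k (p - 1) \<longrightarrow>
    perm_discrepancy p (eta p a k)
      \<le> C * real k powr (1/4) * real p powr (3/4) * (ln (real p))\<^sup>2"
proof (intro exI allI impI)
  fix p a k :: nat
  assume h: "prime p \<and> a \<in> {1..<p} \<and> 2 \<le> k \<and> k \<le> p - 2 \<and> coprime k (p - 1)"
  then have pr: "prime p" and a: "a \<in> {1..<p}" and k1: "2 \<le> k" and k2: "k \<le> p - 2"
    and cop: "coprime k (p - 1)" by auto
  have p0: "p > 0" using pr prime_gt_0_nat by blast
  define M where "M = {discr p J (eta p a k ` I) | I J. I \<in> zn_intervals p \<and> J \<in> zn_intervals p}"
  have "M \<subseteq> (\<lambda>(I, J). discr p J (eta p a k ` I)) ` (zn_intervals p \<times> zn_intervals p)"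
    unfolding M_def by auto
  then have fin: "finite M" by (rule finite_subset) (simp add: zn_intervals_finite)
  have "zn_interval p 0 0 \<in> zn_intervals p" unfolding zn_intervals_def using p0 by blast
  then have ne: "M \<noteq> {}" unfolding M_def by blast
  have "\<forall>x\<in>M. x \<le> 32 * real k powr (1/4) * real p powr (3/4) * (ln (real p))\<^sup>2"
  proof
    fix x assume "x \<in> M"
    then obtain I J where x: "x = discr p J (eta p a k ` I)" and I: "I \<in> zn_intervals p" and J: "J \<in> zn_intervals p"
      unfolding M_def by blast
    show "x \<le> 32 * real k powr (1/4) * real p powr (3/4) * (ln (real p))\<^sup>2"
      unfolding x by (rule main_bound[OF pr a k1 k2 cop I J])
  qed
  then show "perm_discrepancy p (eta p a k) \<le> 32 * real k powr (1/4) * real p powr (3/4) * (ln (real p))\<^sup>2"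
    unfolding perm_discrepancy_def M_def[symmetric] using fin ne by (simp add: Max_le_iff)
qed

end
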